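(* Let $N$ be a temporal phylogenetic network. Then $N$ is tree-based if and only if $N$ satisfies the antichain-to-leaf property.
   Context: $X$ is a nonempty finite set. A phylogenetic network on $X$ is a rooted acyclic digraph with no parallel arcs such that: the unique root has out-degree at least one; $X$ is exactly the set of vertices of out-degree zero (leaves), each of in-degree one; every other vertex either has in-degree one and out-degree at least two (a tree vertex) or in-degree at least two and out-degree one (a reticulation). If $|X|=1$, the network may also consist of the single vertex in $X$. An arc ending in a reticulation is a reticulation arc; all other arcs are tree arcs. A phylogenetic network $N$ on $X$ is tree-based if it can be obtained from some phylogenetic $X$-tree (phylogenetic network with no reticulations) $T$ by first taking a subdivision of $T$ (new vertices are attachment points) and then adding new arcs $(u,v)$ where either $u$ and $v$ are both attachment points, or $u$ is a non-leaf vertex of $T$ and $v$ is an attachment point; equivalently, $N$ has a rooted spanning tree with the same root as $N$ all of whose leaves lie in $X$. $N=(V,A)$ is temporal if there is a map $\lambda:V\to\mathbb{R}$ with $\lambda(u)<\lambda(v)$ for every tree arc $(u,v)$ and $\lambda(u)=\lambda(v)$ for every reticulation arc $(u,v)$. An antichain is a set of vertices no two of which are joined by a directed path. $N$ satisfies the antichain-to-leaf property if for every antichain of $k$ vertices there exist $k$ vertex-disjoint directed paths from the elements of the antichain to leaves of $N$. *)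

theory Defs
  imports Main "HOL.Real"
begin

text \<open>A directed graph is given by a vertex set V and an arc set A of ordered pairs
  (so there are no parallel arcs).\<close>

definition indeg :: "('a \<times> 'a) set \<Rightarrow> 'a \<Rightarrow> nat" where
  "indeg A v = card {u. (u, v) \<in> A}"

definition outdeg :: "('a \<times> 'a) set \<Rightarrow> 'a \<Rightarrow> nat" where
  "outdeg A v = card {w. (v, w) \<in> A}"

definition phylo_network :: "'a set \<Rightarrow> ('a \<times> 'a) set \<Rightarrow> 'a set \<Rightarrow> 'a \<Rightarrow> bool" where
  "phylo_network V A X r \<longleftrightarrow>
     finite V \<and> A \<subseteq> V \<times> V \<and> X \<noteq> {} \<and> X \<subseteq> V \<and> r \<in> V \<and>
     acyclic A \<and>
     indeg A r = 0 \<and> (\<forall>v\<in>V. v \<noteq> r \<longrightarrow> indeg A v \<ge> 1) \<and>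
     ((V = {r} \<and> X = {r} \<and> A = {}) \<or>
      (outdeg A r \<ge> 1 \<and>
       X = {v\<in>V. outdeg A v = 0} \<and>
       (\<forall>x\<in>X. indeg A x = 1) \<and>
       (\<forall>v\<in>V. v \<noteq> r \<and> v \<notin> X \<longrightarrow>
          (indeg A v = 1 \<and> outdeg A v \<ge> 2) \<or> (indeg A v \<ge> 2 \<and> outdeg A v = 1))))"

definition reticulation :: "('a \<times> 'a) set \<Rightarrow> 'a \<Rightarrow> bool" where
  "reticulation A v \<longleftrightarrow> indeg A v \<ge> 2"

definition tree_based :: "'a set \<Rightarrow> ('a \<times> 'a) set \<Rightarrow> 'a set \<Rightarrow> 'a \<Rightarrow> bool" where
  "tree_based V A X r \<longleftrightarrow>
     (\<exists>S. S \<subseteq> A \<and>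
          (\<forall>v\<in>V. (r, v) \<in> S\<^sup>*) \<and>
          (\<forall>v\<in>V. v \<noteq> r \<longrightarrow> indeg S v = 1) \<and>
          indeg S r = 0 \<and>
          (\<forall>v\<in>V. outdeg S v = 0 \<longrightarrow> v \<in> X))"

definition temporal :: "'a set \<Rightarrow> ('a \<times> 'a) set \<Rightarrow> bool" where
  "temporal V A \<longleftrightarrow>
     (\<exists>t :: 'a \<Rightarrow> real. \<forall>(u, v)\<in>A.
        (reticulation A v \<longrightarrow> t u = t v) \<and> (\<not> reticulation A v \<longrightarrow> t u < t v))"

definition antichain :: "'a set \<Rightarrow> ('a \<times> 'a) set \<Rightarrow> 'a set \<Rightarrow> bool" where
  "antichain V A S \<longleftrightarrow> S \<subseteq> V \<and> (\<forall>u\<in>S. \<forall>v\<in>S. u \<noteq> v \<longrightarrow> (u, v) \<notin> A\<^sup>+)"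

definition dpath :: "('a \<times> 'a) set \<Rightarrow> 'a list \<Rightarrow> bool" where
  "dpath A p \<longleftrightarrow> p \<noteq> [] \<and> successively (\<lambda>u v. (u, v) \<in> A) p"

definition antichain_to_leaf :: "'a set \<Rightarrow> ('a \<times> 'a) set \<Rightarrow> 'a set \<Rightarrow> bool" where
  "antichain_to_leaf V A X \<longleftrightarrow>
     (\<forall>S. antichain V A S \<longrightarrow>
        (\<exists>P :: 'a \<Rightarrow> 'a list.
           (\<forall>s\<in>S. dpath A (P s) \<and> hd (P s) = s \<and> last (P s) \<in> X) \<and>
           (\<forall>s\<in>S. \<forall>t\<in>S. s \<noteq> t \<longrightarrow> set (P s) \<inter> set (P t) = {})))"

end

theory Submission
  imports Defs
begin


lemma hall_aux:
  fixes S :: "'i \<Rightarrow> 'b set"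
  shows "finite I \<Longrightarrow> (\<forall>i\<in>I. finite (S i)) \<Longrightarrow> (\<forall>J\<subseteq>I. card J \<le> card (\<Union>(S ` J)))
    \<Longrightarrow> \<exists>f. inj_on f I \<and> (\<forall>i\<in>I. f i \<in> S i)"
proof (induction "card I" arbitrary: I S rule: less_induct)
  case less
  note fin = less.prems(1) and finS = less.prems(2) and cond = less.prems(3)
  show ?case
  proof (cases "I = {}")
    case True then show ?thesis by auto
  next
    case False
    show ?thesis
    proof (cases "\<forall>J. J \<subseteq> I \<and> J \<noteq> {} \<and> J \<noteq> I \<longrightarrow> card J < card (\<Union>(S ` J))")
      case True
      from False obtain i0 where i0: "i0 \<in> I" by auto
      have "card {i0} \<le> card (S i0)" using cond[rule_format, of "{i0}"] i0 by simp
      then have "S i0 \<noteq> {}" by auto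
      then obtain x where x: "x \<in> S i0" by auto
      define I' where "I' = I - {i0}"
      define S' where "S' = (\<lambda>i. S i - {x})"
      have cI': "card I' < card I" using fin i0 unfolding I'_def by (rule card_Diff1_less)
      have cond': "\<forall>J\<subseteq>I'. card J \<le> card (\<Union>(S' ` J))"
      proof (intro allI impI)
        fix J assume J: "J \<subseteq> I'"
        show "card J \<le> card (\<Union>(S' ` J))"
        proof (cases "J = {}")
          case True then show ?thesis by simp
        next
          case False
          have "J \<noteq> I" using J i0 unfolding I'_def by auto
          moreover have "J \<subseteq> I" using J unfolding I'_def by auto
          ultimately have lt: "card J < card (\<Union>(S ` J))" using True False by blast
          have eq: "\<Union>(S' ` J) = \<Union>(S ` J) - {x}" unfolding S'_def by auto
          have "finite (\<Union>(S ` J))" using finS \<open>J \<subseteq> I\<close> fin by (meson finite_UN_I finite_subset subsetD)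
          then have "card (\<Union>(S ` J)) - 1 \<le> card (\<Union>(S ` J) - {x})"
            by (metis card_Diff_singleton card_Diff_singleton_if diff_le_self order_refl)
          moreover have "card J \<le> card (\<Union>(S ` J)) - 1" using lt by linarith
          ultimately show ?thesis unfolding eq by linarith
        qed
      qed
      have "\<forall>i\<in>I'. finite (S' i)" using finS unfolding S'_def I'_def by auto
      moreover have "finite I'" using fin unfolding I'_def by auto
      ultimately obtain f where f: "inj_on f I'" "\<forall>i\<in>I'. f i \<in> S' i"
        using less.hyps[OF cI' \<open>finite I'\<close> _ cond'] by blast
      define g where "g = f(i0 := x)"
      have "inj_on g I"
      proof (rule inj_onI)
        fix a b assume ab: "a \<in> I" "b \<in> I" "g a = g b"
        show "a = b"
        proof (cases "a = i0"; cases "b = i0")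
          assume "a = i0" "b \<noteq> i0"
          then have "b \<in> I'" using ab unfolding I'_def by auto
          then show ?thesis using f(2) ab \<open>a = i0\<close> \<open>b \<noteq> i0\<close> unfolding g_def S'_def by auto
        next
          assume "a \<noteq> i0" "b = i0"
          then have "a \<in> I'" using ab unfolding I'_def by auto
          then show ?thesis using f(2) ab \<open>a \<noteq> i0\<close> \<open>b = i0\<close> unfolding g_def S'_def by auto
        next
          assume "a \<noteq> i0" "b \<noteq> i0"
          then show ?thesis using f(1) ab unfolding g_def I'_def by (auto dest: inj_onD)
        qed simp
      qed
      moreover have "\<forall>i\<in>I. g i \<in> S i" using f(2) x unfolding g_def S'_def I'_def by auto
      ultimately show ?thesis by blast
    next
      case False2: False
      then obtain J where J0: "J \<subseteq> I" "J \<noteq> {}" "J \<noteq> I" "\<not> card J < card (\<Union>(S ` J))" by blast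
      then have J: "J \<subseteq> I" "J \<noteq> {}" "J \<noteq> I" "card (\<Union>(S ` J)) \<le> card J" by auto
      define U where "U = \<Union>(S ` J)"
      have finJ: "finite J" using J fin finite_subset by auto
      have cJ: "card J < card I" using J fin by (meson psubsetI psubset_card_mono)
      have condJ: "\<forall>J'\<subseteq>J. card J' \<le> card (\<Union>(S ` J'))" using cond J(1) by blast
      have finSJ: "\<forall>i\<in>J. finite (S i)" using finS J(1) by blast
      obtain f1 where f1: "inj_on f1 J" "\<forall>i\<in>J. f1 i \<in> S i"
        using less.hyps[OF cJ finJ finSJ condJ] by blast
      define K where "K = I - J"
      define S2 where "S2 = (\<lambda>i. S i - U)"
      have "card K = card I - card J" unfolding K_def using J(1) finJ by (simp add: card_Diff_subset)
      moreover have "card J > 0" using finJ J(2) by auto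
      moreover have "card J \<le> card I" using J(1) fin by (simp add: card_mono)
      ultimately have cK: "card K < card I" by linarith
      have finU: "finite U" unfolding U_def using finJ finS J by auto
      have cond2: "\<forall>L\<subseteq>K. card L \<le> card (\<Union>(S2 ` L))"
      proof (intro allI impI)
        fix L assume L: "L \<subseteq> K"
        have finL: "finite L" using L fin unfolding K_def using finite_subset by blast
        have "L \<union> J \<subseteq> I" using L J unfolding K_def by auto
        then have c1: "card (L \<union> J) \<le> card (\<Union>(S ` (L \<union> J)))" using cond by blast
        have c2: "card (L \<union> J) = card L + card J" using L finL finJ unfolding K_def
          by (subst card_Un_disjoint) auto
        have e: "\<Union>(S ` (L \<union> J)) = \<Union>(S2 ` L) \<union> U" unfolding S2_def U_def by auto
        have finS2: "finite (\<Union>(S2 ` L))" using finL finS L unfolding K_def S2_def by auto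
        have "card (\<Union>(S2 ` L) \<union> U) = card (\<Union>(S2 ` L)) + card U"
          using finS2 finU by (subst card_Un_disjoint) (auto simp: S2_def)
        then have c3: "card (\<Union>(S ` (L \<union> J))) = card (\<Union>(S2 ` L)) + card U" using e by simp
        have c4: "card U \<le> card J" using J(4) unfolding U_def .
        show "card L \<le> card (\<Union>(S2 ` L))" using c1 c2 c3 c4 by linarith
      qed
      have "finite K" using fin unfolding K_def by auto
      moreover have "\<forall>i\<in>K. finite (S2 i)" using finS unfolding K_def S2_def by auto
      ultimately obtain f2 where f2: "inj_on f2 K" "\<forall>i\<in>K. f2 i \<in> S2 i"
        using less.hyps[OF cK \<open>finite K\<close> _ cond2] by blast
      define g where "g = (\<lambda>i. if i \<in> J then f1 i else f2 i)"
      have "inj_on g I"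
      proof (rule inj_onI)
        fix a b assume ab: "a \<in> I" "b \<in> I" "g a = g b"
        show "a = b"
        proof (cases "a \<in> J"; cases "b \<in> J")
          assume "a \<in> J" "b \<in> J" then show ?thesis using ab f1(1) unfolding g_def by (auto dest: inj_onD)
        next
          assume "a \<in> J" "b \<notin> J"
          then have "f1 a \<in> U" "f2 b \<notin> U" using f1 f2 ab unfolding U_def K_def S2_def by auto
          then show ?thesis using ab \<open>a \<in> J\<close> \<open>b \<notin> J\<close> unfolding g_def by auto
        next
          assume "a \<notin> J" "b \<in> J"
          then have "f1 b \<in> U" "f2 a \<notin> U" using f1 f2 ab unfolding U_def K_def S2_def by auto
          then show ?thesis using ab \<open>a \<notin> J\<close> \<open>b \<in> J\<close> unfolding g_def by auto
        next
          assume "a \<notin> J" "b \<notin> J" then show ?thesis using ab f2(1) unfolding g_def K_def by (auto dest: inj_onD)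
        qed
      qed
      moreover have "\<forall>i\<in>I. g i \<in> S i" using f1 f2 unfolding g_def K_def S2_def by auto
      ultimately show ?thesis by blast
    qed
  qed
qed




lemma sv_rtrancl_linear:
  assumes sv: "single_valued R" and ab: "(a,b)\<in>R\<^sup>*" and ac: "(a,c)\<in>R\<^sup>*"
  shows "(b,c)\<in>R\<^sup>* \<or> (c,b)\<in>R\<^sup>*"
  using ab
proof (induction rule: rtrancl_induct)
  case base
  then show ?case using ac by simp
next
  case (step b b')
  from step.IH show ?case
  proof
    assume "(b,c)\<in>R\<^sup>*"
    then show ?thesis
    proof (cases rule: converse_rtranclE)
      case base then show ?thesis using step.hyps(2) by auto
    next
      case (step x)
      then have "x = b'" using sv \<open>(b,b')\<in>R\<close> by (auto simp: single_valued_def)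
      then show ?thesis using step by auto
    qed
  next
    assume "(c,b)\<in>R\<^sup>*" then show ?thesis using step.hyps(2) by (meson rtrancl.rtrancl_into_rtrancl)
  qed
qed

lemma succ_next:
  assumes "successively R p" "b \<in> set p" "b \<noteq> last p" "\<And>z. R b z \<Longrightarrow> z = b'"
  shows "b' \<in> set p"
  using assms
proof (induction p)
  case Nil then show ?case by simp
next
  case (Cons x xs)
  show ?case
  proof (cases "b = x")
    case True
    then have "xs \<noteq> []" using Cons.prems(3) by auto
    then obtain y ys where xs: "xs = y # ys" by (cases xs) auto
    then have "R x y" using Cons.prems(1) by simp
    then show ?thesis using Cons.prems(4) True xs by auto
  next
    case False
    then have b: "b \<in> set xs" using Cons.prems(2) by simp
    then have "xs \<noteq> []" by auto
    then have "last (x#xs) = last xs" by simp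
    moreover have succ: "successively R xs" using Cons.prems(1) by (cases xs) auto
    ultimately have "b' \<in> set xs" using Cons.IH[OF succ b _ Cons.prems(4)] Cons.prems(3) by auto
    then show ?thesis by simp
  qed
qed

lemma tb_atl:
  assumes N: "phylo_network V A X r" and T: "tree_based V A X r"
  shows "antichain_to_leaf V A X"
proof -
  have finV: "finite V" and AV: "A \<subseteq> V \<times> V" and acA: "acyclic A"
    using N unfolding phylo_network_def by auto
  obtain S where S: "S \<subseteq> A" "\<forall>v\<in>V. (r, v) \<in> S\<^sup>*" "\<forall>v\<in>V. v \<noteq> r \<longrightarrow> indeg S v = 1"
    "indeg S r = 0" "\<forall>v\<in>V. outdeg S v = 0 \<longrightarrow> v \<in> X"
    using T unfolding tree_based_def by blast
  have SV: "S \<subseteq> V \<times> V" using S(1) AV by auto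
  have finS: "finite S" using finV SV by (meson finite_SigmaI finite_subset)
  have acS: "acyclic S" using acA S(1) acyclic_subset by blast
  have wfS: "wf (S\<inverse>)" using finS acS by (rule finite_acyclic_wf_converse)
  have par_fin: "finite {u. (u,v) \<in> S}" for v
    by (rule finite_subset[of _ V]) (use SV finV in auto)
  have uniq: "a = b" if "(a,v)\<in>S" "(b,v)\<in>S" for a b v
  proof -
    have v: "v \<in> V" using that SV by auto
    have "v \<noteq> r" using S(4) that(1) par_fin[of r] unfolding indeg_def by auto
    then have "card {u. (u,v) \<in> S} = 1" using S(3) v unfolding indeg_def by auto
    then obtain x where "{u. (u,v) \<in> S} = {x}" by (rule card_1_singletonE)
    then have "a \<in> {x}" "b \<in> {x}" using that by (metis mem_Collect_eq)+
    then show ?thesis by simp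
  qed
  have sv: "single_valued (S\<inverse>)" using uniq unfolding single_valued_def by auto
  have path: "\<exists>p. successively (\<lambda>u v. (u,v)\<in>S) p \<and> p \<noteq> [] \<and> hd p = s \<and> outdeg S (last p) = 0
      \<and> (\<forall>x\<in>set p. (s,x)\<in>S\<^sup>*)" for s
    using wfS
  proof (induction s rule: wf_induct_rule)
    case (less s)
    show ?case
    proof (cases "outdeg S s = 0")
      case True
      then show ?thesis by (intro exI[of _ "[s]"]) auto
    next
      case False
      then obtain c where c: "(s,c)\<in>S" unfolding outdeg_def by fastforce
      then obtain p where p: "successively (\<lambda>u v. (u,v)\<in>S) p" "p \<noteq> []" "hd p = c" "outdeg S (last p) = 0"
        "\<forall>x\<in>set p. (c,x)\<in>S\<^sup>*" using less by auto
      have "successively (\<lambda>u v. (u,v)\<in>S) (s # p)" using p c by (cases p) auto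
      moreover have "\<forall>x\<in>set (s#p). (s,x)\<in>S\<^sup>*" using p(5) c by (auto intro: converse_rtrancl_into_rtrancl)
      ultimately show ?thesis using p by (intro exI[of _ "s#p"]) auto
    qed
  qed
  show ?thesis unfolding antichain_to_leaf_def
  proof (intro allI impI)
    fix T assume AT: "antichain V A T"
    define P where "P s = (SOME p. successively (\<lambda>u v. (u,v)\<in>S) p \<and> p \<noteq> [] \<and> hd p = s \<and> outdeg S (last p) = 0
      \<and> (\<forall>x\<in>set p. (s,x)\<in>S\<^sup>*))" for s
    have P: "successively (\<lambda>u v. (u,v)\<in>S) (P s) \<and> P s \<noteq> [] \<and> hd (P s) = s \<and> outdeg S (last (P s)) = 0
      \<and> (\<forall>x\<in>set (P s). (s,x)\<in>S\<^sup>*)" for s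
      unfolding P_def by (rule someI_ex[OF path])
    have "\<forall>s\<in>T. dpath A (P s) \<and> hd (P s) = s \<and> last (P s) \<in> X"
    proof
      fix s assume s: "s \<in> T"
      then have sV: "s \<in> V" using AT unfolding antichain_def by auto
      have "successively (\<lambda>u v. (u,v)\<in>A) (P s)"
        using P[of s] S(1) by (auto elim: successively_mono)
      moreover have "last (P s) \<in> V"
      proof -
        have "(s, last (P s)) \<in> S\<^sup>*" using P[of s] by auto
        then show ?thesis using sV SV by (cases rule: rtranclE) auto
      qed
      ultimately show "dpath A (P s) \<and> hd (P s) = s \<and> last (P s) \<in> X"
        using P[of s] S(5) unfolding dpath_def by auto
    qed
    moreover have "\<forall>s\<in>T. \<forall>t\<in>T. s \<noteq> t \<longrightarrow> set (P s) \<inter> set (P t) = {}"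
    proof (intro ballI impI)
      fix s t assume st: "s \<in> T" "t \<in> T" "s \<noteq> t"
      show "set (P s) \<inter> set (P t) = {}"
      proof (rule ccontr)
        assume "set (P s) \<inter> set (P t) \<noteq> {}"
        then obtain x where "(s,x)\<in>S\<^sup>*" "(t,x)\<in>S\<^sup>*" using P by blast
        then have "(x,s)\<in>(S\<inverse>)\<^sup>*" "(x,t)\<in>(S\<inverse>)\<^sup>*" by (auto simp: rtrancl_converse)
        then have "(s,t)\<in>(S\<inverse>)\<^sup>* \<or> (t,s)\<in>(S\<inverse>)\<^sup>*" using sv_rtrancl_linear[OF sv] by blast
        then have "(t,s)\<in>S\<^sup>* \<or> (s,t)\<in>S\<^sup>*" by (auto simp: rtrancl_converse)
        then have "(t,s)\<in>S\<^sup>+ \<or> (s,t)\<in>S\<^sup>+" using st(3) by (auto simp: rtrancl_eq_or_trancl)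
        then have "(t,s)\<in>A\<^sup>+ \<or> (s,t)\<in>A\<^sup>+" using trancl_mono S(1) by blast
        moreover have "(s,t) \<notin> A\<^sup>+" "(t,s) \<notin> A\<^sup>+" using AT st unfolding antichain_def by auto
        ultimately show False by blast
      qed
    qed
    ultimately show "\<exists>P. (\<forall>s\<in>T. dpath A (P s) \<and> hd (P s) = s \<and> last (P s) \<in> X) \<and>
             (\<forall>s\<in>T. \<forall>t\<in>T. s \<noteq> t \<longrightarrow> set (P s) \<inter> set (P t) = {})" by blast
  qed
qed




locale tnet =
  fixes V :: "'a set" and A X r and t :: "'a \<Rightarrow> real"
  assumes N: "phylo_network V A X r"
    and nontriv: "\<not> (V = {r} \<and> X = {r} \<and> A = {})"
    and temp: "\<forall>(u, v)\<in>A. (reticulation A v \<longrightarrow> t u = t v) \<and> (\<not> reticulation A v \<longrightarrow> t u < t v)"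
    and atl: "antichain_to_leaf V A X"
begin

lemma finV: "finite V" and AV: "A \<subseteq> V \<times> V" and XV: "X \<subseteq> V" and rV: "r \<in> V"
  and acA: "acyclic A" and indr: "indeg A r = 0" and indV: "\<forall>v\<in>V. v \<noteq> r \<longrightarrow> indeg A v \<ge> 1"
  and Xdef: "X = {v\<in>V. outdeg A v = 0}" and indX: "\<forall>x\<in>X. indeg A x = 1"
  and inner: "\<forall>v\<in>V. v \<noteq> r \<and> v \<notin> X \<longrightarrow>
          (indeg A v = 1 \<and> outdeg A v \<ge> 2) \<or> (indeg A v \<ge> 2 \<and> outdeg A v = 1)"
  using N nontriv unfolding phylo_network_def by auto

lemma finA: "finite A" using finV AV by (meson finite_SigmaI finite_subset)
lemma wfA: "wf A" using finA acA by (rule finite_acyclic_wf)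

lemma par_fin: "finite {u. (u,v) \<in> A}"
  by (rule finite_subset[of _ V]) (use AV finV in auto)
lemma ch_fin: "finite {u. (v,u) \<in> A}"
  by (rule finite_subset[of _ V]) (use AV finV in auto)

lemma no_in_r: "(u,r) \<notin> A"
  using indr par_fin[of r] unfolding indeg_def by auto

lemma arcV: "(u,v) \<in> A \<Longrightarrow> u \<in> V \<and> v \<in> V" using AV by auto

abbreviation ret where "ret v \<equiv> reticulation A v"

lemma ret_parent: "ret v \<Longrightarrow> \<exists>u. (u,v)\<in>A"
  unfolding reticulation_def indeg_def by (metis (no_types, lifting) Collect_empty_eq card.empty not_numeral_le_zero)

lemma retV: "ret v \<Longrightarrow> v \<in> V" using ret_parent arcV by blast
lemma ret_not_r: "ret v \<Longrightarrow> v \<noteq> r" using ret_parent no_in_r by blast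
lemma ret_not_X: "ret v \<Longrightarrow> v \<notin> X" using indX unfolding reticulation_def by force
lemma ret_out1: "ret v \<Longrightarrow> outdeg A v = 1"
  using inner retV ret_not_r ret_not_X unfolding reticulation_def by force

lemma ret_child_unique: "ret v \<Longrightarrow> (v,a)\<in>A \<Longrightarrow> (v,b)\<in>A \<Longrightarrow> a = b"
proof -
  assume "ret v" "(v,a)\<in>A" "(v,b)\<in>A"
  then have "card {u. (v,u) \<in> A} = 1" using ret_out1 unfolding outdeg_def by auto
  then obtain x where "{u. (v,u) \<in> A} = {x}" by (rule card_1_singletonE)
  then have "a \<in> {x}" "b \<in> {x}" using \<open>(v,a)\<in>A\<close> \<open>(v,b)\<in>A\<close> by (metis mem_Collect_eq)+
  then show "a = b" by simp
qed

lemma notX_child: "v \<in> V \<Longrightarrow> v \<notin> X \<Longrightarrow> \<exists>c. (v,c)\<in>A"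
  using Xdef unfolding outdeg_def by force

lemma X_nochild: "x \<in> X \<Longrightarrow> (x,c) \<notin> A"
  using Xdef ch_fin[of x] unfolding outdeg_def by auto

lemma has_parent: "v \<in> V \<Longrightarrow> v \<noteq> r \<Longrightarrow> \<exists>u. (u,v)\<in>A"
  using indV unfolding indeg_def by (metis (no_types, lifting) Collect_empty_eq card.empty not_one_le_zero)

lemma nonret_parent_unique:
  assumes "v \<in> V" "v \<noteq> r" "\<not> ret v" "(a,v)\<in>A" "(b,v)\<in>A" shows "a = b"
proof -
  have "card {u. (u,v) \<in> A} = 1" using assms indV unfolding reticulation_def indeg_def by force
  then obtain x where "{u. (u,v) \<in> A} = {x}" by (rule card_1_singletonE)
  then have "a \<in> {x}" "b \<in> {x}" using assms by (metis mem_Collect_eq)+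
  then show "a = b" by simp
qed

lemma t_ret: "(u,v)\<in>A \<Longrightarrow> ret v \<Longrightarrow> t u = t v" using temp by auto
lemma t_nonret: "(u,v)\<in>A \<Longrightarrow> \<not> ret v \<Longrightarrow> t u < t v" using temp by auto
lemma t_arc: "(u,v)\<in>A \<Longrightarrow> t u \<le> t v" using t_ret t_nonret by force

lemma t_rtrancl: "(u,v)\<in>A\<^sup>* \<Longrightarrow> t u \<le> t v"
  by (induction rule: rtrancl_induct) (auto dest: t_arc)

lemma t_trancl_nonret: "(u,v)\<in>A\<^sup>+ \<Longrightarrow> \<not> ret v \<Longrightarrow> t u < t v"
  by (metis order_le_less_trans t_nonret t_rtrancl tranclD2)

definition F where "F = {(a,b)\<in>A. ret a \<and> ret b}"

lemma F_A: "F \<subseteq> A" unfolding F_def by auto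

lemma F_sv: "single_valued F"
  unfolding F_def single_valued_def using ret_child_unique by auto

lemma forced:
  assumes p: "successively (\<lambda>u v. (u,v)\<in>A) p" "last p \<in> X" and a: "a \<in> set p" and ab: "(a,b)\<in>F\<^sup>*"
  shows "b \<in> set p"
  using ab
proof (induction rule: rtrancl_induct)
  case base then show ?case using a .
next
  case (step b b')
  have "ret b" "(b,b')\<in>A" using step.hyps(2) unfolding F_def by auto
  then have "b \<noteq> last p" using ret_not_X p(2) by auto
  then show ?case using succ_next[OF p(1) step.IH] ret_child_unique[OF \<open>ret b\<close> \<open>(b,b')\<in>A\<close>] by blast
qed

lemma same_time_F:
  assumes "(x,y)\<in>A\<^sup>*" "ret x" shows "t y \<le> t x \<longrightarrow> (x,y)\<in>F\<^sup>* \<and> ret y"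
  using assms(1)
proof (induction rule: rtrancl_induct)
  case base then show ?case using assms(2) by simp
next
  case (step z y')
  show ?case
  proof
    assume le: "t y' \<le> t x"
    have "t x \<le> t z" using step.hyps(1) t_rtrancl by blast
    moreover have "t z \<le> t y'" using step.hyps(2) t_arc by blast
    ultimately have eq: "t z = t y'" "t y' = t x" using le by linarith+
    then have "(x,z)\<in>F\<^sup>* \<and> ret z" using step.IH by linarith
    moreover have "ret y'" using eq t_nonret step.hyps(2) by force
    ultimately show "(x,y')\<in>F\<^sup>* \<and> ret y'" using step.hyps(2) unfolding F_def
      by (auto intro: rtrancl_into_rtrancl)
  qed
qed

lemma second:
  assumes "dpath A p" "hd p = s" "last p \<in> X" "s \<notin> X"
  shows "\<exists>c q. p = s # c # q \<and> (s,c)\<in>A"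
proof -
  obtain rest where p: "p = s # rest" using assms(1,2) unfolding dpath_def by (cases p) auto
  then have "rest \<noteq> []" using assms(3,4) by auto
  then obtain c q where "rest = c # q" by (cases rest) auto
  then show ?thesis using p assms(1) unfolding dpath_def by auto
qed

end



context tnet begin

definition NO where "NO = {u\<in>V. u \<notin> X \<and> \<not> ret u \<and> (\<forall>c. (u,c)\<in>A \<longrightarrow> ret c)}"
definition fch where "fch u = {h. (u,h)\<in>A \<and> (\<forall>y. (y,h)\<in>A \<longrightarrow> \<not> ret y)}"

lemma level_inj:
  assumes W: "W \<subseteq> NO"
  shows "\<exists>g. inj_on g {u\<in>W. t u = \<tau>} \<and> (\<forall>u\<in>W. t u = \<tau> \<longrightarrow> g u \<in> \<Union>(fch ` W) \<and> t (g u) = \<tau>)"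
proof -
  define Wt where "Wt = {u\<in>W. t u = \<tau>}"
  define chW where "chW = {c. \<exists>w\<in>Wt. (w,c)\<in>A}"
  define Y where "Y = {y. ret y \<and> (\<exists>c\<in>chW. (y,c)\<in>A) \<and> \<not> (\<exists>w\<in>Wt. (w,y)\<in>A\<^sup>+)}"
  have WtNO: "\<And>u. u \<in> Wt \<Longrightarrow> u \<in> NO" using W unfolding Wt_def by auto
  have NO_V: "u \<in> V" "u \<notin> X" "\<not> ret u" "(u,c)\<in>A \<Longrightarrow> ret c" if "u \<in> NO" for u c
    using that unfolding NO_def by auto
  have tWt: "\<And>u. u \<in> Wt \<Longrightarrow> t u = \<tau>" unfolding Wt_def by auto
  have chW_ret: "ret c" "t c = \<tau>" if cc: "c \<in> chW" for c
  proof -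
    obtain w where w: "w \<in> Wt" "(w,c)\<in>A" using cc unfolding chW_def by auto
    show "ret c" using NO_V(4)[OF WtNO[OF w(1)] w(2)] .
    then show "t c = \<tau>" using t_ret[OF w(2)] tWt[OF w(1)] by simp
  qed
  define Sa where "Sa = Wt \<union> Y"
  have Y_props: "ret y" "\<exists>c\<in>chW. (y,c)\<in>A" "\<not> (\<exists>w\<in>Wt. (w,y)\<in>A\<^sup>+)" if "y \<in> Y" for y
    using that unfolding Y_def by auto
  have tY: "t y = \<tau>" if "y \<in> Y" for y
    using Y_props(2)[OF that] chW_ret t_ret by force
  have anti: "antichain V A Sa"
    unfolding antichain_def
  proof (intro conjI ballI impI)
    show "Sa \<subseteq> V" unfolding Sa_def using WtNO NO_V(1) Y_props(1) retV by blast
  next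
    fix u v assume uv: "u \<in> Sa" "v \<in> Sa" "u \<noteq> v"
    show "(u,v) \<notin> A\<^sup>+"
    proof
      assume path: "(u,v)\<in>A\<^sup>+"
      show False
      proof (cases "v \<in> Wt")
        case True
        have "t u = \<tau>" using uv(1) tWt tY unfolding Sa_def by auto
        moreover have "t u < t v" using t_trancl_nonret[OF path] NO_V(3)[OF WtNO[OF True]] .
        ultimately show False using tWt[OF True] by simp
      next
        case False
        then have vY: "v \<in> Y" using uv(2) unfolding Sa_def by auto
        show False
        proof (cases "u \<in> Wt")
          case True then show False using Y_props(3)[OF vY] path by blast
        next
          case False
          then have uY: "u \<in> Y" using uv(1) unfolding Sa_def by auto
          obtain c where c: "c \<in> chW" "(u,c)\<in>A" using Y_props(2)[OF uY] by auto
          obtain x where x: "(u,x)\<in>A" "(x,v)\<in>A\<^sup>*" using path by (meson tranclD)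
          have "x = c" using ret_child_unique[OF Y_props(1)[OF uY] x(1) c(2)] .
          obtain w where w: "w \<in> Wt" "(w,c)\<in>A" using c(1) unfolding chW_def by auto
          have "(w,v)\<in>A\<^sup>+" using w(2) x(2) \<open>x = c\<close> by auto
          then show False using Y_props(3)[OF vY] w(1) by blast
        qed
      qed
    qed
  qed
  obtain P where P: "\<forall>s\<in>Sa. dpath A (P s) \<and> hd (P s) = s \<and> last (P s) \<in> X"
    "\<forall>s\<in>Sa. \<forall>s'\<in>Sa. s \<noteq> s' \<longrightarrow> set (P s) \<inter> set (P s') = {}"
    using atl anti unfolding antichain_to_leaf_def by blast
  have Psucc: "successively (\<lambda>u v. (u,v)\<in>A) (P s)" "last (P s) \<in> X" if "s \<in> Sa" for s
    using P(1) that unfolding dpath_def by auto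
  define cu where "cu u = P u ! 1" for u
  have cu: "(u, cu u)\<in>A" "cu u \<in> set (P u)" "cu u \<in> chW" if uu: "u \<in> Wt" for u
  proof -
    have "u \<in> Sa" using uu unfolding Sa_def by auto
    then obtain c q where "P u = u # c # q" "(u,c)\<in>A"
      using second P(1) NO_V(2)[OF WtNO[OF uu]] by blast
    then show "(u, cu u)\<in>A" "cu u \<in> set (P u)" unfolding cu_def by auto
    then show "cu u \<in> chW" using uu unfolding chW_def by auto
  qed
  have wfF: "wf (F\<^sup>+)" using wf_subset[OF wfA F_A] by (rule wf_trancl)
  define B where "B u = {h\<in>chW. (h, cu u)\<in>F\<^sup>*}" for u
  define hu where "hu u = (SOME h. h \<in> B u \<and> (\<forall>h'. (h',h)\<in>F\<^sup>+ \<longrightarrow> h' \<notin> B u))" for u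
  have hu: "hu u \<in> B u \<and> (\<forall>h'. (h',hu u)\<in>F\<^sup>+ \<longrightarrow> h' \<notin> B u)" if "u \<in> Wt" for u
  proof -
    have "cu u \<in> B u" using cu[OF that] unfolding B_def by auto
    then have "\<exists>h. h \<in> B u \<and> (\<forall>h'. (h',h)\<in>F\<^sup>+ \<longrightarrow> h' \<notin> B u)"
      using wfF by (meson wfE_min)
    then show ?thesis unfolding hu_def by (rule someI_ex)
  qed
  have hu_free: "\<not> ret y" if u: "u \<in> Wt" and y: "(y, hu u)\<in>A" for u y
  proof
    assume ry: "ret y"
    let ?h = "hu u"
    have hB: "?h \<in> chW" "(?h, cu u)\<in>F\<^sup>*" using hu[OF u] unfolding B_def by auto
    have yh: "(y, ?h)\<in>F" using ry y chW_ret(1)[OF hB(1)] unfolding F_def by auto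
    show False
    proof (cases "\<exists>w\<in>Wt. (w,y)\<in>A\<^sup>+")
      case True
      then obtain w where w: "w \<in> Wt" "(w,y)\<in>A\<^sup>+" by blast
      obtain x where x: "(w,x)\<in>A" "(x,y)\<in>A\<^sup>*" using w(2) by (meson tranclD)
      have rx: "ret x" using NO_V(4)[OF WtNO[OF w(1)] x(1)] .
      have "t x = \<tau>" using t_ret[OF x(1) rx] tWt[OF w(1)] by simp
      moreover have "t y = \<tau>" using t_ret[OF y chW_ret(1)[OF hB(1)]] chW_ret(2)[OF hB(1)] by simp
      ultimately have "(x,y)\<in>F\<^sup>*" using same_time_F[OF x(2) rx] by simp
      then have xh: "(x,?h)\<in>F\<^sup>+" using yh by auto
      then have "(x, cu u)\<in>F\<^sup>*" using hB(2) by auto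
      moreover have "x \<in> chW" using w(1) x(1) unfolding chW_def by auto
      ultimately have "x \<in> B u" unfolding B_def by auto
      then show False using hu[OF u] xh by blast
    next
      case False
      then have yY: "y \<in> Y" using ry y hB(1) unfolding Y_def by auto
      then have ySa: "y \<in> Sa" unfolding Sa_def by auto
      obtain c q where Py: "P y = y # c # q" "(y,c)\<in>A"
        using second P(1) ySa ret_not_X[OF ry] by blast
      have "c = ?h" using ret_child_unique[OF ry Py(2) y] .
      then have "?h \<in> set (P y)" using Py by simp
      then have in1: "cu u \<in> set (P y)" using forced[OF Psucc[OF ySa]] hB(2) by blast
      have in2: "cu u \<in> set (P u)" using cu(2)[OF u] .
      have uSa: "u \<in> Sa" using u unfolding Sa_def by auto
      have "y \<noteq> u" using ry NO_V(3)[OF WtNO[OF u]] by auto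
      then show False using P(2) ySa uSa in1 in2 by blast
    qed
  qed
  have hu_fch: "hu u \<in> \<Union>(fch ` W)" "t (hu u) = \<tau>" if u: "u \<in> Wt" for u
  proof -
    have hB: "hu u \<in> chW" using hu[OF u] unfolding B_def by auto
    then obtain w where w: "w \<in> Wt" "(w, hu u)\<in>A" unfolding chW_def by auto
    have "hu u \<in> fch w" unfolding fch_def using w(2) hu_free[OF u] by auto
    then show "hu u \<in> \<Union>(fch ` W)" using w(1) unfolding Wt_def by auto
    show "t (hu u) = \<tau>" using chW_ret(2)[OF hB] .
  qed
  have "inj_on hu Wt"
  proof (rule inj_onI)
    fix u1 u2 assume u: "u1 \<in> Wt" "u2 \<in> Wt" "hu u1 = hu u2"
    show "u1 = u2"
    proof (rule ccontr)
      assume ne: "u1 \<noteq> u2"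
      have "(hu u1, cu u1)\<in>F\<^sup>*" "(hu u2, cu u2)\<in>F\<^sup>*" using hu[OF u(1)] hu[OF u(2)] unfolding B_def by auto
      then have "(hu u1, cu u1)\<in>F\<^sup>*" "(hu u1, cu u2)\<in>F\<^sup>*" using u(3) by auto
      then have lin: "(cu u1, cu u2)\<in>F\<^sup>* \<or> (cu u2, cu u1)\<in>F\<^sup>*" using sv_rtrancl_linear[OF F_sv] by blast
      have uSa: "u1 \<in> Sa" "u2 \<in> Sa" using u unfolding Sa_def by auto
      have "cu u2 \<in> set (P u1) \<or> cu u1 \<in> set (P u2)"
        using lin forced[OF Psucc[OF uSa(1)] cu(2)[OF u(1)]] forced[OF Psucc[OF uSa(2)] cu(2)[OF u(2)]] by blast
      then show False using cu(2)[OF u(1)] cu(2)[OF u(2)] P(2) uSa ne by blast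
    qed
  qed
  then show ?thesis using hu_fch unfolding Wt_def by (intro exI[of _ hu]) auto
qed

end



context tnet begin

lemma hall_cond:
  assumes W: "W \<subseteq> NO" shows "card W \<le> card (\<Union>(fch ` W))"
proof -
  have "\<forall>\<tau>. \<exists>g. inj_on g {u\<in>W. t u = \<tau>} \<and> (\<forall>u\<in>W. t u = \<tau> \<longrightarrow> g u \<in> \<Union>(fch ` W) \<and> t (g u) = \<tau>)"
    using level_inj[OF W] by blast
  then obtain G where G: "\<And>\<tau>. inj_on (G \<tau>) {u\<in>W. t u = \<tau>}"
    "\<And>\<tau> u. u \<in> W \<Longrightarrow> t u = \<tau> \<Longrightarrow> G \<tau> u \<in> \<Union>(fch ` W) \<and> t (G \<tau> u) = \<tau>"
    by metis
  define H where "H u = G (t u) u" for u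
  have "inj_on H W"
  proof (rule inj_onI)
    fix a b assume ab: "a \<in> W" "b \<in> W" "H a = H b"
    have "t a = t b" using G(2)[OF ab(1) refl] G(2)[OF ab(2) refl] ab(3) unfolding H_def by metis
    then have "G (t a) a = G (t a) b" using ab(3) unfolding H_def by simp
    then show "a = b" using G(1)[of "t a"] ab(1,2) \<open>t a = t b\<close> by (auto dest: inj_onD)
  qed
  moreover have "H ` W \<subseteq> \<Union>(fch ` W)" using G(2) unfolding H_def by auto
  moreover have "finite (\<Union>(fch ` W))"
    by (rule finite_subset[of _ V]) (use AV finV in \<open>auto simp: fch_def\<close>)
  ultimately show ?thesis by (rule card_inj_on_le)
qed

definition Om where "Om = {u\<in>V. u \<notin> X \<and> (\<forall>c. (u,c)\<in>A \<longrightarrow> ret c)}"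

lemma matching: "\<exists>m. inj_on m Om \<and> (\<forall>u\<in>Om. (u, m u)\<in>A)"
proof -
  have finNO: "finite NO" using finV unfolding NO_def by auto
  have "\<forall>i\<in>NO. finite (fch i)"
  proof
    fix i show "finite (fch i)" by (rule finite_subset[OF _ ch_fin[of i]]) (auto simp: fch_def)
  qed
  then obtain mt where mt: "inj_on mt NO" "\<forall>i\<in>NO. mt i \<in> fch i"
    using hall_aux[OF finNO] hall_cond by blast
  define m where "m u = (if ret u then (SOME c. (u,c)\<in>A) else mt u)" for u
  have m_arc: "(u, m u)\<in>A" if "u \<in> Om" for u
  proof (cases "ret u")
    case True
    then have "\<exists>c. (u,c)\<in>A" using notX_child retV ret_not_X by blast
    then show ?thesis using True unfolding m_def by (auto intro: someI_ex)
  next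
    case False
    then have "u \<in> NO" using that unfolding NO_def Om_def by auto
    then show ?thesis using mt(2) False unfolding m_def fch_def by auto
  qed
  have m_nonret: "\<not> ret u \<Longrightarrow> u \<in> Om \<Longrightarrow> m u \<in> fch u \<and> u \<in> NO" for u
    using mt(2) unfolding m_def NO_def Om_def by auto
  have "inj_on m Om"
  proof (rule inj_onI)
    fix u1 u2 assume u: "u1 \<in> Om" "u2 \<in> Om" "m u1 = m u2"
    show "u1 = u2"
    proof (rule ccontr)
      assume ne: "u1 \<noteq> u2"
      show False
      proof (cases "ret u1"; cases "ret u2")
        assume r1: "ret u1" and r2: "ret u2"
        define c where "c = m u1"
        have a1: "(u1,c)\<in>A" using m_arc[OF u(1)] unfolding c_def .
        have a2: "(u2,c)\<in>A" using m_arc[OF u(2)] u(3) unfolding c_def by simp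
        have nopath: "(a,b) \<notin> A\<^sup>+" if "ret a" "(a,c)\<in>A" "(b,c)\<in>A" for a b
        proof
          assume "(a,b)\<in>A\<^sup>+"
          then obtain x where "(a,x)\<in>A" "(x,b)\<in>A\<^sup>*" by (meson tranclD)
          then have "(c,b)\<in>A\<^sup>*" using ret_child_unique[OF that(1) _ that(2)] by blast
          then have "(c,c)\<in>A\<^sup>+" using that(3) by auto
          then show False using acA unfolding acyclic_def by blast
        qed
        have "antichain V A {u1,u2}" unfolding antichain_def
          using nopath[OF r1 a1 a2] nopath[OF r2 a2 a1] retV r1 r2 by auto
        then obtain P where P: "\<forall>s\<in>{u1,u2}. dpath A (P s) \<and> hd (P s) = s \<and> last (P s) \<in> X"
          "\<forall>s\<in>{u1,u2}. \<forall>s'\<in>{u1,u2}. s \<noteq> s' \<longrightarrow> set (P s) \<inter> set (P s') = {}"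
          using atl unfolding antichain_to_leaf_def by blast
        obtain c1 q1 where P1: "P u1 = u1 # c1 # q1" "(u1,c1)\<in>A"
          using second P(1) ret_not_X[OF r1] by blast
        obtain c2 q2 where P2: "P u2 = u2 # c2 # q2" "(u2,c2)\<in>A"
          using second P(1) ret_not_X[OF r2] by blast
        have "c1 = c" "c2 = c" using ret_child_unique r1 r2 P1 P2 a1 a2 by blast+
        then show False using P(2) P1 P2 ne by auto
      next
        assume r1: "ret u1" and r2: "\<not> ret u2"
        have "m u2 \<in> fch u2" using m_nonret[OF r2 u(2)] by auto
        moreover have "(u1, m u2)\<in>A" using m_arc[OF u(1)] u(3) by simp
        ultimately show False using r1 unfolding fch_def by auto
      next
        assume r1: "\<not> ret u1" and r2: "ret u2"
        have "m u1 \<in> fch u1" using m_nonret[OF r1 u(1)] by auto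
        moreover have "(u2, m u1)\<in>A" using m_arc[OF u(2)] u(3) by simp
        ultimately show False using r2 unfolding fch_def by auto
      next
        assume r1: "\<not> ret u1" and r2: "\<not> ret u2"
        then have "mt u1 = mt u2" using u(3) unfolding m_def by simp
        then show False using mt(1) m_nonret[OF r1 u(1)] m_nonret[OF r2 u(2)] ne by (auto dest: inj_onD)
      qed
    qed
  qed
  then show ?thesis using m_arc by blast
qed

lemma atl_tb: "tree_based V A X r"
proof -
  obtain m where m: "inj_on m Om" "\<forall>u\<in>Om. (u, m u)\<in>A" using matching by blast
  define p where "p v = (if \<exists>u\<in>Om. m u = v then (SOME u. u \<in> Om \<and> m u = v) else (SOME u. (u,v)\<in>A))" for v
  have p_arc: "(p v, v)\<in>A" if "v \<in> V" "v \<noteq> r" for v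
  proof (cases "\<exists>u\<in>Om. m u = v")
    case True
    then have ex: "\<exists>u. u \<in> Om \<and> m u = v" by blast
    have "p v \<in> Om \<and> m (p v) = v" using True someI_ex[OF ex] unfolding p_def by simp
    then show ?thesis using m(2) by auto
  next
    case False
    then show ?thesis using has_parent[OF that] unfolding p_def by (auto intro: someI_ex)
  qed
  have p_m: "p (m u) = u" if "u \<in> Om" for u
  proof -
    have T: "\<exists>u'\<in>Om. m u' = m u" using that by auto
    have ex: "\<exists>u'. u' \<in> Om \<and> m u' = m u" using that by auto
    have "p (m u) \<in> Om \<and> m (p (m u)) = m u" using T someI_ex[OF ex] unfolding p_def by simp
    then show ?thesis using m(1) that by (auto dest: inj_onD)
  qed
  define S where "S = {(p v, v) | v. v \<in> V \<and> v \<noteq> r}"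
  have SA: "S \<subseteq> A" unfolding S_def using p_arc by auto
  have Sin: "{u. (u,v)\<in>S} = (if v \<in> V \<and> v \<noteq> r then {p v} else {})" for v
    unfolding S_def by auto
  have reach: "(r, v) \<in> S\<^sup>*" if "v \<in> V" for v
    using wfA that
  proof (induction v rule: wf_induct_rule)
    case (less v)
    show ?case
    proof (cases "v = r")
      case True then show ?thesis by simp
    next
      case False
      have a: "(p v, v)\<in>A" using p_arc less.prems False by auto
      then have "(r, p v)\<in>S\<^sup>*" using less.IH arcV by blast
      moreover have "(p v, v)\<in>S" unfolding S_def using less.prems False by auto
      ultimately show ?thesis by auto
    qed
  qed
  have leaves: "v \<in> X" if v: "v \<in> V" "outdeg S v = 0" for v
  proof (rule ccontr)
    assume vX: "v \<notin> X"
    have finch: "finite {w. (v,w)\<in>S}" by (rule finite_subset[OF _ ch_fin[of v]]) (use SA in auto)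
    have "\<exists>c. (v,c)\<in>S"
    proof (cases "v \<in> Om")
      case True
      have a: "(v, m v)\<in>A" using m(2) True by auto
      then have "m v \<in> V" "m v \<noteq> r" using arcV no_in_r by auto
      then have "(p (m v), m v)\<in>S" unfolding S_def by auto
      then show ?thesis using p_m[OF True] by auto
    next
      case False
      then obtain c where c: "(v,c)\<in>A" "\<not> ret c" using v vX unfolding Om_def by auto
      then have cV: "c \<in> V" "c \<noteq> r" using arcV no_in_r by auto
      have "p c = v" using nonret_parent_unique[OF cV c(2) p_arc[OF cV] c(1)] .
      then have "(v,c)\<in>S" using cV unfolding S_def by force
      then show ?thesis by auto
    qed
    then have "card {w. (v,w)\<in>S} \<noteq> 0" using finch by auto
    then show False using v(2) unfolding outdeg_def by simp
  qed
  show ?thesis unfolding tree_based_def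
    using SA reach leaves Sin unfolding indeg_def by (intro exI[of _ S]) auto
qed

end

theorem theorem4:
  assumes "phylo_network V A X r"
    and "temporal V A"
  shows "tree_based V A X r \<longleftrightarrow> antichain_to_leaf V A X"
proof
  assume "tree_based V A X r" then show "antichain_to_leaf V A X" by (rule tb_atl[OF assms(1)])
next
  assume atl: "antichain_to_leaf V A X"
  show "tree_based V A X r"
  proof (cases "V = {r} \<and> X = {r} \<and> A = {}")
    case True
    then show ?thesis unfolding tree_based_def indeg_def outdeg_def by (intro exI[of _ "{}"]) auto
  next
    case False
    obtain t :: "'a \<Rightarrow> real" where t: "\<forall>(u, v)\<in>A. (reticulation A v \<longrightarrow> t u = t v) \<and> (\<not> reticulation A v \<longrightarrow> t u < t v)"
      using assms(2) unfolding temporal_def by blast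
    interpret tnet V A X r t using assms(1) False t atl by unfold_locales
    show ?thesis by (rule atl_tb)
  qed
qed


end
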